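(* Fix a task $(\mathcal{S},\mathcal{A},\_,d_0,\mathcal{R},\gamma)$ and a set $\Pi$ of stationary policies containing a nonempty open subset of $\Pi^+$. Then every pair of transition models $(\mathcal{T},\mathcal{T}')$ with $J_{\mathcal{T}},J_{\mathcal{T}'}$ both non-trivial on $\Pi$ and not equivalent on $\Pi$ is exploitable relative to $\Pi$ and this task.
   Context: Setting: finite $\mathcal{S}$, finite $\mathcal{A}$ with $|\mathcal{A}|>1$, $d_0\in\Delta(\mathcal{S})$, $\mathcal{R}:\mathcal{S}\times\mathcal{A}\to\mathbb{R}$, $\gamma\in[0,1)$; transition models $\mathcal{T}:\mathcal{S}\times\mathcal{A}\to\Delta(\mathcal{S})$; all states reachable. A task is an MDP without its transition model. Stationary policies are identified with $\Delta(\mathcal{A})^{|\mathcal{S}|}\subset\mathbb{R}^{\mathcal{S}\times\mathcal{A}}$; $\Pi^+$ is the set with $\pi(a\mid s)>0$ for all $s,a$, and "open" means open in $\Pi^+$. $J_{\mathcal{T}}(\pi)=\mathbb{E}\big[\sum_{t\ge0}\gamma^t\mathcal{R}(s_t,a_t)\big]$ with $s_0\sim d_0$, $a_t\sim\pi(\cdot\mid s_t)$, $s_{t+1}\sim\mathcal{T}(\cdot\mid s_t,a_t)$. $J$ is trivial on $\Pi$ if constant on $\Pi$; $J_1,J_2$ equivalent on $\Pi$ if for all $\pi,\pi'\in\Pi$, $J_1(\pi)\ge J_1(\pi')\iff J_2(\pi)\ge J_2(\pi')$. $(\mathcal{T},\mathcal{T}')$ is exploitable relative to $\Pi$ if there are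 $\pi,\pi'\in\Pi$ with $J_{\mathcal{T}}(\pi)>J_{\mathcal{T}}(\pi')$ and $J_{\mathcal{T}'}(\pi')>J_{\mathcal{T}'}(\pi)$. *)

theory Defs
  imports "HOL-Analysis.Analysis"
begin

definition is_distrib :: "('x::finite \<Rightarrow> real) \<Rightarrow> bool" where
  "is_distrib p \<longleftrightarrow> (\<forall>x. p x \<ge> 0) \<and> (\<Sum>x\<in>UNIV. p x) = 1"

definition policies :: "('s::finite \<Rightarrow> 'a::finite \<Rightarrow> real) set" where
  "policies = {\<pi>. \<forall>s. is_distrib (\<pi> s)}"

definition policies_pos :: "('s::finite \<Rightarrow> 'a::finite \<Rightarrow> real) set" where
  "policies_pos = {\<pi> \<in> policies. \<forall>s a. \<pi> s a > 0}"

text \<open>Transition models T : S x A -> Delta(S); T s a s' is the probability of s'.\<close>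
definition transition_models :: "('s::finite \<Rightarrow> 'a::finite \<Rightarrow> 's \<Rightarrow> real) set" where
  "transition_models = {T. \<forall>s a. is_distrib (T s a)}"

text \<open>State distribution at time t: P(s_t = s) with s_0 ~ d0, a_t ~ pi(.|s_t),
  s_{t+1} ~ T(.|s_t,a_t).\<close>
fun state_dist :: "('s::finite \<Rightarrow> real) \<Rightarrow> ('s \<Rightarrow> 'a::finite \<Rightarrow> 's \<Rightarrow> real)
    \<Rightarrow> ('s \<Rightarrow> 'a \<Rightarrow> real) \<Rightarrow> nat \<Rightarrow> 's \<Rightarrow> real" where
  "state_dist d0 T \<pi> 0 s' = d0 s'"
| "state_dist d0 T \<pi> (Suc t) s' =
     (\<Sum>s\<in>UNIV. \<Sum>a\<in>UNIV. state_dist d0 T \<pi> t s * \<pi> s a * T s a s')"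

text \<open>J_T(pi) = E[ sum_t gamma^t R(s_t,a_t) ].\<close>
definition J :: "('s::finite \<Rightarrow> real) \<Rightarrow> ('s \<Rightarrow> 'a::finite \<Rightarrow> real) \<Rightarrow> real
    \<Rightarrow> ('s \<Rightarrow> 'a \<Rightarrow> 's \<Rightarrow> real) \<Rightarrow> ('s \<Rightarrow> 'a \<Rightarrow> real) \<Rightarrow> real" where
  "J d0 R \<gamma> T \<pi> =
     (\<Sum>t. \<gamma> ^ t * (\<Sum>s\<in>UNIV. \<Sum>a\<in>UNIV. state_dist d0 T \<pi> t s * \<pi> s a * R s a))"

definition all_reachable :: "('s::finite \<Rightarrow> real) \<Rightarrow> ('s \<Rightarrow> 'a::finite \<Rightarrow> 's \<Rightarrow> real) \<Rightarrow> bool" where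
  "all_reachable d0 T \<longleftrightarrow>
     (\<forall>s. \<exists>\<pi>\<in>(policies :: ('s \<Rightarrow> 'a \<Rightarrow> real) set). \<exists>t. state_dist d0 T \<pi> t s > 0)"

definition trivial_on :: "('p \<Rightarrow> real) \<Rightarrow> 'p set \<Rightarrow> bool" where
  "trivial_on f P \<longleftrightarrow> (\<forall>x\<in>P. \<forall>y\<in>P. f x = f y)"

definition equivalent_on :: "('p \<Rightarrow> real) \<Rightarrow> ('p \<Rightarrow> real) \<Rightarrow> 'p set \<Rightarrow> bool" where
  "equivalent_on f g P \<longleftrightarrow> (\<forall>x\<in>P. \<forall>y\<in>P. f x \<ge> f y \<longleftrightarrow> g x \<ge> g y)"

definition exploitable :: "('s::finite \<Rightarrow> real) \<Rightarrow> ('s \<Rightarrow> 'a::finite \<Rightarrow> real) \<Rightarrow> real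
    \<Rightarrow> ('s \<Rightarrow> 'a \<Rightarrow> 's \<Rightarrow> real) \<Rightarrow> ('s \<Rightarrow> 'a \<Rightarrow> 's \<Rightarrow> real)
    \<Rightarrow> ('s \<Rightarrow> 'a \<Rightarrow> real) set \<Rightarrow> bool" where
  "exploitable d0 R \<gamma> T T' P \<longleftrightarrow>
     (\<exists>\<pi>\<in>P. \<exists>\<pi>'\<in>P. J d0 R \<gamma> T \<pi> > J d0 R \<gamma> T \<pi>' \<and> J d0 R \<gamma> T' \<pi>' > J d0 R \<gamma> T' \<pi>)"

end

theory Submission
  imports Defs "HOL-Computational_Algebra.Polynomial"
begin

definition Pm :: "('s::finite \<Rightarrow> 'a::finite \<Rightarrow> 's \<Rightarrow> real) \<Rightarrow> ('s \<Rightarrow> 'a \<Rightarrow> real) \<Rightarrow> 's \<Rightarrow> 's \<Rightarrow> real" where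
  "Pm T \<pi> s s' = (\<Sum>a\<in>UNIV. \<pi> s a * T s a s')"

definition rv :: "('s::finite \<Rightarrow> 'a::finite \<Rightarrow> real) \<Rightarrow> ('s \<Rightarrow> 'a \<Rightarrow> real) \<Rightarrow> 's \<Rightarrow> real" where
  "rv R \<pi> s = (\<Sum>a\<in>UNIV. \<pi> s a * R s a)"

definition Am :: "real \<Rightarrow> ('s::finite \<Rightarrow> 'a::finite \<Rightarrow> 's \<Rightarrow> real) \<Rightarrow> ('s \<Rightarrow> 'a \<Rightarrow> real) \<Rightarrow> real^'s^'s" where
  "Am \<gamma> T \<pi> = (\<chi> i j. (if i = j then 1 else 0) - \<gamma> * Pm T \<pi> j i)"

definition Ak :: "('s::finite \<Rightarrow> real) \<Rightarrow> real \<Rightarrow> ('s \<Rightarrow> 'a::finite \<Rightarrow> 's \<Rightarrow> real) \<Rightarrow> ('s \<Rightarrow> 'a \<Rightarrow> real) \<Rightarrow> 's \<Rightarrow> real^'s^'s" where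
  "Ak d0 \<gamma> T \<pi> k = (\<chi> i j. if j = k then d0 i else Am \<gamma> T \<pi> $ i $ j)"

definition NN where "NN d0 R \<gamma> T \<pi> = (\<Sum>k\<in>UNIV. rv R \<pi> k * det (Ak d0 \<gamma> T \<pi> k))"
definition DD where "DD \<gamma> T \<pi> = det (Am \<gamma> T \<pi>)"

definition mu where "mu d0 \<gamma> T \<pi> s = (\<Sum>t. \<gamma> ^ t * state_dist d0 T \<pi> t s)"

lemma state_dist_Suc': "state_dist d0 T \<pi> (Suc t) s' = (\<Sum>s\<in>UNIV. state_dist d0 T \<pi> t s * Pm T \<pi> s s')"
  by (simp add: Pm_def sum_distrib_left mult.assoc)

lemma Pm_nonneg: "\<pi> \<in> policies \<Longrightarrow> T \<in> transition_models \<Longrightarrow> Pm T \<pi> s s' \<ge> 0"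
  unfolding Pm_def policies_def transition_models_def is_distrib_def
  by (auto intro!: sum_nonneg mult_nonneg_nonneg)

lemma Pm_sum: "\<pi> \<in> policies \<Longrightarrow> T \<in> transition_models \<Longrightarrow> (\<Sum>s'\<in>UNIV. Pm T \<pi> s s') = 1"
proof -
  assume p: "\<pi> \<in> policies" and t: "T \<in> transition_models"
  have "(\<Sum>s'\<in>UNIV. Pm T \<pi> s s') = (\<Sum>a\<in>UNIV. \<pi> s a * (\<Sum>s'\<in>UNIV. T s a s'))"
    unfolding Pm_def sum_distrib_left by (subst sum.swap) simp
  also have "\<dots> = (\<Sum>a\<in>UNIV. \<pi> s a)" using t unfolding transition_models_def is_distrib_def by simp
  also have "\<dots> = 1" using p unfolding policies_def is_distrib_def by simp
  finally show ?thesis .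
qed

lemma dist_props:
  assumes "is_distrib d0" "\<pi> \<in> policies" "T \<in> transition_models"
  shows "(\<forall>s. state_dist d0 T \<pi> t s \<ge> 0) \<and> (\<Sum>s\<in>UNIV. state_dist d0 T \<pi> t s) = 1"
proof (induction t)
  case 0
  then show ?case using assms(1) by (simp add: is_distrib_def)
next
  case (Suc t)
  have nn: "\<forall>s. state_dist d0 T \<pi> (Suc t) s \<ge> 0"
    unfolding state_dist_Suc' using Suc Pm_nonneg[OF assms(2,3)]
    by (auto intro!: sum_nonneg mult_nonneg_nonneg)
  have "(\<Sum>s'\<in>UNIV. state_dist d0 T \<pi> (Suc t) s') = (\<Sum>s\<in>UNIV. state_dist d0 T \<pi> t s * (\<Sum>s'\<in>UNIV. Pm T \<pi> s s'))"
    unfolding state_dist_Suc' sum_distrib_left by (subst sum.swap) (simp add: mult_ac)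
  also have "\<dots> = 1" using Suc Pm_sum[OF assms(2,3)] by simp
  finally show ?case using nn by simp
qed

lemma dist_le1:
  assumes "is_distrib d0" "\<pi> \<in> policies" "T \<in> transition_models"
  shows "state_dist d0 T \<pi> t s \<le> 1"
proof -
  have "state_dist d0 T \<pi> t s \<le> (\<Sum>s\<in>UNIV. state_dist d0 T \<pi> t s)"
    using dist_props[OF assms, of t] by (intro member_le_sum) auto
  then show ?thesis using dist_props[OF assms, of t] by simp
qed

lemma summable_dist:
  assumes "is_distrib d0" "\<pi> \<in> policies" "T \<in> transition_models" "0 \<le> \<gamma>" "\<gamma> < 1"
  shows "summable (\<lambda>t. \<gamma> ^ t * state_dist d0 T \<pi> t s)"
proof (rule summable_comparison_test'[where g="\<lambda>t. \<gamma> ^ t"])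
  show "summable (\<lambda>t. \<gamma> ^ t)" using assms by (simp add: summable_geometric)
  fix n
  show "norm (\<gamma> ^ n * state_dist d0 T \<pi> n s) \<le> \<gamma> ^ n"
    using dist_props[OF assms(1-3), of n] dist_le1[OF assms(1-3), of n s] assms(4)
    by (simp add: abs_mult mult_left_le)
qed

lemma J_mu:
  assumes "is_distrib d0" "\<pi> \<in> policies" "T \<in> transition_models" "0 \<le> \<gamma>" "\<gamma> < 1"
  shows "J d0 R \<gamma> T \<pi> = (\<Sum>s\<in>UNIV. mu d0 \<gamma> T \<pi> s * rv R \<pi> s)"
proof -
  have "J d0 R \<gamma> T \<pi> = (\<Sum>t. \<Sum>s\<in>UNIV. \<gamma> ^ t * state_dist d0 T \<pi> t s * rv R \<pi> s)"
    unfolding J_def rv_def by (simp add: sum_distrib_left mult.assoc)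
  also have "\<dots> = (\<Sum>s\<in>UNIV. \<Sum>t. \<gamma> ^ t * state_dist d0 T \<pi> t s * rv R \<pi> s)"
    by (rule suminf_sum) (intro summable_mult2 summable_dist[OF assms])
  also have "\<dots> = (\<Sum>s\<in>UNIV. mu d0 \<gamma> T \<pi> s * rv R \<pi> s)"
    unfolding mu_def by (intro sum.cong refl suminf_mult2[symmetric] summable_dist[OF assms])
  finally show ?thesis .
qed

lemma mu_rec:
  assumes "is_distrib d0" "\<pi> \<in> policies" "T \<in> transition_models" "0 \<le> \<gamma>" "\<gamma> < 1"
  shows "mu d0 \<gamma> T \<pi> s' = d0 s' + \<gamma> * (\<Sum>s\<in>UNIV. mu d0 \<gamma> T \<pi> s * Pm T \<pi> s s')"
proof -
  let ?f = "\<lambda>t. \<gamma> ^ t * state_dist d0 T \<pi> t s'"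
  have sf: "summable ?f" by (rule summable_dist[OF assms])
  have "(\<Sum>n. ?f (Suc n)) = (\<Sum>n. \<Sum>s\<in>UNIV. \<gamma> * ((\<gamma> ^ n * state_dist d0 T \<pi> n s) * Pm T \<pi> s s'))"
    unfolding state_dist_Suc' by (simp add: sum_distrib_left mult_ac)
  also have "\<dots> = (\<Sum>s\<in>UNIV. \<Sum>n. \<gamma> * ((\<gamma> ^ n * state_dist d0 T \<pi> n s) * Pm T \<pi> s s'))"
    by (rule suminf_sum) (intro summable_mult summable_mult2 summable_dist[OF assms])
  also have "\<dots> = (\<Sum>s\<in>UNIV. \<gamma> * (mu d0 \<gamma> T \<pi> s * Pm T \<pi> s s'))"
  proof (intro sum.cong refl)
    fix s
    have "(\<Sum>n. \<gamma> * ((\<gamma> ^ n * state_dist d0 T \<pi> n s) * Pm T \<pi> s s')) = \<gamma> * (\<Sum>n. (\<gamma> ^ n * state_dist d0 T \<pi> n s) * Pm T \<pi> s s')"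
      by (intro suminf_mult summable_mult2 summable_dist[OF assms])
    also have "(\<Sum>n. (\<gamma> ^ n * state_dist d0 T \<pi> n s) * Pm T \<pi> s s') = mu d0 \<gamma> T \<pi> s * Pm T \<pi> s s'"
      unfolding mu_def by (intro suminf_mult2[symmetric] summable_dist[OF assms])
    finally show "(\<Sum>n. \<gamma> * ((\<gamma> ^ n * state_dist d0 T \<pi> n s) * Pm T \<pi> s s')) = \<gamma> * (mu d0 \<gamma> T \<pi> s * Pm T \<pi> s s')" .
  qed
  finally have e: "(\<Sum>n. ?f (Suc n)) = \<gamma> * (\<Sum>s\<in>UNIV. mu d0 \<gamma> T \<pi> s * Pm T \<pi> s s')"
    by (simp add: sum_distrib_left)
  have "mu d0 \<gamma> T \<pi> s' = ?f 0 + (\<Sum>n. ?f (Suc n))"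
    unfolding mu_def using suminf_split_head[OF sf] by simp
  then show ?thesis using e by simp
qed

lemma Am_mu:
  assumes "is_distrib d0" "\<pi> \<in> policies" "T \<in> transition_models" "0 \<le> \<gamma>" "\<gamma> < 1"
  shows "Am \<gamma> T \<pi> *v (\<chi> s. mu d0 \<gamma> T \<pi> s) = (\<chi> s. d0 s)"
proof -
  have "(Am \<gamma> T \<pi> *v (\<chi> s. mu d0 \<gamma> T \<pi> s)) $ i = d0 i" for i
  proof -
    have "(Am \<gamma> T \<pi> *v (\<chi> s. mu d0 \<gamma> T \<pi> s)) $ i
       = (\<Sum>j\<in>UNIV. ((if i = j then 1 else 0) - \<gamma> * Pm T \<pi> j i) * mu d0 \<gamma> T \<pi> j)"
      unfolding matrix_vector_mult_def Am_def by simp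
    also have "\<dots> = (\<Sum>j\<in>UNIV. (if j = i then mu d0 \<gamma> T \<pi> j else 0) - \<gamma> * (mu d0 \<gamma> T \<pi> j * Pm T \<pi> j i))"
      by (intro sum.cong refl) (auto simp: algebra_simps)
    also have "\<dots> = mu d0 \<gamma> T \<pi> i - \<gamma> * (\<Sum>j\<in>UNIV. mu d0 \<gamma> T \<pi> j * Pm T \<pi> j i)"
      by (simp add: sum_subtractf sum_distrib_left)
    also have "\<dots> = d0 i" using mu_rec[OF assms, of i] by simp
    finally show ?thesis .
  qed
  then show ?thesis by (simp add: vec_eq_iff)
qed

lemma Am_ker:
  assumes "\<pi> \<in> policies" "T \<in> transition_models" "0 \<le> \<gamma>" "\<gamma> < 1"
    and x: "Am \<gamma> T \<pi> *v x = 0"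
  shows "x = 0"
proof -
  have xi: "x $ i = \<gamma> * (\<Sum>j\<in>UNIV. Pm T \<pi> j i * x $ j)" for i
  proof -
    have "0 = (Am \<gamma> T \<pi> *v x) $ i" using x by simp
    also have "\<dots> = (\<Sum>j\<in>UNIV. ((if i = j then 1 else 0) - \<gamma> * Pm T \<pi> j i) * x $ j)"
      unfolding matrix_vector_mult_def Am_def by simp
    also have "\<dots> = (\<Sum>j\<in>UNIV. (if j = i then x $ j else 0) - \<gamma> * (Pm T \<pi> j i * x $ j))"
      by (intro sum.cong refl) (auto simp: algebra_simps)
    also have "\<dots> = x $ i - \<gamma> * (\<Sum>j\<in>UNIV. Pm T \<pi> j i * x $ j)"
      by (simp add: sum_subtractf sum_distrib_left)
    finally show ?thesis by simp
  qed
  have ai: "\<bar>x $ i\<bar> \<le> \<gamma> * (\<Sum>j\<in>UNIV. Pm T \<pi> j i * \<bar>x $ j\<bar>)" for i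
  proof -
    have "\<bar>x $ i\<bar> = \<gamma> * \<bar>\<Sum>j\<in>UNIV. Pm T \<pi> j i * x $ j\<bar>"
      using xi[of i] assms(3) by (simp add: abs_mult)
    also have "\<dots> \<le> \<gamma> * (\<Sum>j\<in>UNIV. Pm T \<pi> j i * \<bar>x $ j\<bar>)"
      using assms(3) Pm_nonneg[OF assms(1,2)]
      by (intro mult_left_mono order.trans[OF sum_abs]) (auto simp: abs_mult)
    finally show ?thesis .
  qed
  let ?S = "\<Sum>i\<in>UNIV. \<bar>x $ i\<bar>"
  have "?S \<le> (\<Sum>i\<in>UNIV. \<gamma> * (\<Sum>j\<in>UNIV. Pm T \<pi> j i * \<bar>x $ j\<bar>))"
    by (intro sum_mono ai)
  also have "\<dots> = \<gamma> * (\<Sum>j\<in>UNIV. \<bar>x $ j\<bar> * (\<Sum>i\<in>UNIV. Pm T \<pi> j i))"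
    unfolding sum_distrib_left by (subst sum.swap) (simp add: mult_ac)
  also have "\<dots> = \<gamma> * ?S" using Pm_sum[OF assms(1,2)] by simp
  finally have "(1 - \<gamma>) * ?S \<le> 0" by (simp add: algebra_simps)
  moreover have "?S \<ge> 0" by (simp add: sum_nonneg)
  ultimately have "?S = 0" using assms(4) by (simp add: mult_le_0_iff)
  then have "\<forall>i\<in>UNIV. \<bar>x $ i\<bar> = 0" by (subst sum_nonneg_eq_0_iff[symmetric]) auto
  then show ?thesis by (simp add: vec_eq_iff)
qed

lemma DD_nz:
  assumes "\<pi> \<in> policies" "T \<in> transition_models" "0 \<le> \<gamma>" "\<gamma> < 1"
  shows "DD \<gamma> T \<pi> \<noteq> 0"
proof -
  let ?A = "Am \<gamma> T \<pi>"
  have lin: "linear ((*v) ?A)" by (simp add: matrix_vector_mul_linear)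
  have "inj ((*v) ?A)"
  proof (rule injI)
    fix x y assume "?A *v x = ?A *v y"
    then have "?A *v (x - y) = 0" by (simp add: matrix_vector_mult_diff_distrib)
    then have "x - y = 0" using Am_ker[OF assms] by blast
    then show "x = y" by simp
  qed
  then have "det (matrix ((*v) ?A)) \<noteq> 0" using det_nz_iff_inj[OF lin] by simp
  then show ?thesis unfolding DD_def by simp
qed

lemma J_NN_DD:
  fixes d0 :: "'s::finite \<Rightarrow> real" and \<pi> :: "'s \<Rightarrow> 'a::finite \<Rightarrow> real"
  assumes "is_distrib d0" "\<pi> \<in> policies" "T \<in> transition_models" "0 \<le> \<gamma>" "\<gamma> < 1"
  shows "J d0 R \<gamma> T \<pi> = NN d0 R \<gamma> T \<pi> / DD \<gamma> T \<pi>"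
proof -
  have dz: "DD \<gamma> T \<pi> \<noteq> 0" using DD_nz assms by blast
  have "det (Ak d0 \<gamma> T \<pi> k) = mu d0 \<gamma> T \<pi> k * DD \<gamma> T \<pi>" for k
    using cramer_lemma[where A="Am \<gamma> T \<pi>" and k=k and x="\<chi> s. mu d0 \<gamma> T \<pi> s", unfolded Am_mu[OF assms] vec_lambda_beta]
    unfolding Ak_def DD_def by simp
  then have "NN d0 R \<gamma> T \<pi> / DD \<gamma> T \<pi> = (\<Sum>s\<in>UNIV. mu d0 \<gamma> T \<pi> s * rv R \<pi> s)"
    unfolding NN_def using dz by (simp add: sum_divide_distrib mult_ac)
  then show ?thesis using J_mu[OF assms] by simp
qed

definition seg :: "('s \<Rightarrow> 'a \<Rightarrow> real) \<Rightarrow> ('s \<Rightarrow> 'a \<Rightarrow> real) \<Rightarrow> real \<Rightarrow> ('s \<Rightarrow> 'a \<Rightarrow> real)" where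
  "seg u z t = (\<lambda>s a. (1 - t) * u s a + t * z s a)"

lemma seg_0[simp]: "seg u z 0 = u" and seg_1[simp]: "seg u z 1 = z"
  by (auto simp: seg_def)

lemma seg_pol:
  assumes "u \<in> policies" "z \<in> policies" "0 \<le> t" "t \<le> 1"
  shows "seg u z t \<in> (policies :: ('s::finite \<Rightarrow> 'a::finite \<Rightarrow> real) set)"
proof -
  have "is_distrib (seg u z t s)" for s
  proof -
    have "(\<Sum>a\<in>UNIV. seg u z t s a) = (1 - t) * (\<Sum>a\<in>UNIV. u s a) + t * (\<Sum>a\<in>UNIV. z s a)"
      unfolding seg_def by (simp add: sum.distrib sum_distrib_left)
    also have "\<dots> = 1" using assms(1,2) by (simp add: policies_def is_distrib_def)
    finally show ?thesis using assms unfolding is_distrib_def policies_def seg_def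
      by (auto intro!: add_nonneg_nonneg mult_nonneg_nonneg)
  qed
  then show ?thesis by (simp add: policies_def)
qed

lemma Pm_seg: "Pm T (seg u z t) s s' = (1 - t) * Pm T u s s' + t * Pm T z s s'"
  unfolding Pm_def seg_def by (simp add: distrib_right sum.distrib sum_distrib_left mult.assoc)

lemma rv_seg: "rv R (seg u z t) s = (1 - t) * rv R u s + t * rv R z s"
  unfolding rv_def seg_def by (simp add: distrib_right sum.distrib sum_distrib_left mult.assoc)

definition polyfun :: "(real \<Rightarrow> real) \<Rightarrow> bool" where
  "polyfun f \<longleftrightarrow> (\<exists>p. \<forall>t. f t = poly p t)"

lemma pf_const[intro]: "polyfun (\<lambda>t. c)"
  unfolding polyfun_def by (rule exI[of _ "[:c:]"]) simp

lemma pf_id[intro]: "polyfun (\<lambda>t. t)"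
  unfolding polyfun_def by (rule exI[of _ "[:0, 1:]"]) simp

lemma pf_add[intro]: "polyfun f \<Longrightarrow> polyfun g \<Longrightarrow> polyfun (\<lambda>t. f t + g t)"
  unfolding polyfun_def by (metis poly_add)

lemma pf_mult[intro]: "polyfun f \<Longrightarrow> polyfun g \<Longrightarrow> polyfun (\<lambda>t. f t * g t)"
  unfolding polyfun_def by (metis poly_mult)

lemma pf_diff[intro]: "polyfun f \<Longrightarrow> polyfun g \<Longrightarrow> polyfun (\<lambda>t. f t - g t)"
  unfolding polyfun_def by (metis poly_diff)

lemma pf_sum: "finite I \<Longrightarrow> (\<And>i. i \<in> I \<Longrightarrow> polyfun (f i)) \<Longrightarrow> polyfun (\<lambda>t. \<Sum>i\<in>I. f i t)"
proof (induction I rule: finite_induct)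
  case empty then show ?case by (simp add: pf_const)
next
  case (insert x F) then show ?case by (simp add: pf_add)
qed

lemma pf_prod: "finite I \<Longrightarrow> (\<And>i. i \<in> I \<Longrightarrow> polyfun (f i)) \<Longrightarrow> polyfun (\<lambda>t. \<Prod>i\<in>I. f i t)"
proof (induction I rule: finite_induct)
  case empty then show ?case by (simp add: pf_const)
next
  case (insert x F) then show ?case by (simp add: pf_mult)
qed

lemma det_pf:
  fixes M :: "real \<Rightarrow> real^'n::finite^'n"
  assumes "\<And>i j. polyfun (\<lambda>t. M t $ i $ j)"
  shows "polyfun (\<lambda>t. det (M t))"
  unfolding det_def
  by (intro pf_sum pf_mult pf_const pf_prod finite_permutations finite assms finite_UNIV)

lemma Am_seg: "Am \<gamma> T (seg u z t) $ i $ j = Am \<gamma> T u $ i $ j + t * (Am \<gamma> T z $ i $ j - Am \<gamma> T u $ i $ j)"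
  by (simp add: Am_def Pm_seg algebra_simps)

lemma Ak_seg: "Ak d0 \<gamma> T (seg u z t) k $ i $ j = Ak d0 \<gamma> T u k $ i $ j + t * (Ak d0 \<gamma> T z k $ i $ j - Ak d0 \<gamma> T u k $ i $ j)"
  by (simp add: Ak_def Am_seg)

lemma rv_seg2: "rv R (seg u z t) k = rv R u k + t * (rv R z k - rv R u k)"
  by (simp add: rv_seg algebra_simps)

lemma pf_aff: "polyfun (\<lambda>t. a + t * b)"
  by (intro pf_add pf_mult pf_const pf_id)

lemma DD_pf: "polyfun (\<lambda>t. DD \<gamma> T (seg u z t))"
  unfolding DD_def by (intro det_pf, unfold Am_seg, rule pf_aff)

lemma NN_pf: "polyfun (\<lambda>t. NN d0 R \<gamma> T (seg u z t))"
proof -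
  have "polyfun (\<lambda>t. rv R (seg u z t) k * det (Ak d0 \<gamma> T (seg u z t) k))" for k
  proof (rule pf_mult)
    show "polyfun (\<lambda>t. rv R (seg u z t) k)" unfolding rv_seg2 by (rule pf_aff)
    show "polyfun (\<lambda>t. det (Ak d0 \<gamma> T (seg u z t) k))"
      by (rule det_pf) (unfold Ak_seg, rule pf_aff)
  qed
  then show ?thesis unfolding NN_def by (intro pf_sum) auto
qed

lemma J_rat:
  fixes d0 :: "'s::finite \<Rightarrow> real" and u :: "'s \<Rightarrow> 'a::finite \<Rightarrow> real"
  assumes "is_distrib d0" "T \<in> transition_models" "0 \<le> \<gamma>" "\<gamma> < 1" "u \<in> policies" "z \<in> policies"
  shows "\<exists>p q. \<forall>t\<in>{0..1}. poly q t \<noteq> 0 \<and> J d0 R \<gamma> T (seg u z t) = poly p t / poly q t"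
proof -
  obtain p where p: "\<And>t. NN d0 R \<gamma> T (seg u z t) = poly p t" using NN_pf unfolding polyfun_def by blast
  obtain q where q: "\<And>t. DD \<gamma> T (seg u z t) = poly q t" using DD_pf unfolding polyfun_def by blast
  show ?thesis
  proof (intro exI ballI conjI)
    fix t :: real assume t: "t \<in> {0..1}"
    then have sp: "seg u z t \<in> policies" using seg_pol assms by auto
    show "poly q t \<noteq> 0" using DD_nz[OF sp assms(2-4)] q by simp
    show "J d0 R \<gamma> T (seg u z t) = poly p t / poly q t"
      using J_NN_DD[OF assms(1) sp assms(2-4)] p q by simp
  qed
qed

definition aff :: "(real \<Rightarrow> real) \<Rightarrow> bool" where
  "aff f \<longleftrightarrow> (\<exists>a b. \<forall>t. f t = a + b * t)"

lemma det_aff_col: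
  fixes M :: "real \<Rightarrow> real^'n::finite^'n"
  assumes M: "\<And>t i j. M t $ i $ j = A $ i $ j + t * (B $ i $ j - A $ i $ j)"
    and B: "\<And>i j. j \<noteq> s0 \<Longrightarrow> B $ i $ j = A $ i $ j"
  shows "aff (\<lambda>t. det (M t))"
proof -
  let ?TA = "transpose A" and ?TB = "transpose B"
  have tr: "transpose (M t) = (\<chi> j. if j = s0 then ?TA $ j + t *s (?TB $ j - ?TA $ j) else ?TA $ j)" for t
    unfolding vec_eq_iff[of "transpose (M t)"]
  proof (intro allI, unfold vec_eq_iff, intro allI)
    fix j i
    show "transpose (M t) $ j $ i = (\<chi> j. if j = s0 then ?TA $ j + t *s (?TB $ j - ?TA $ j) else ?TA $ j) $ j $ i"
      by (cases "j = s0") (simp_all add: transpose_def M B right_diff_distrib)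
  qed
  have h: "det (M t) = det (transpose A) + det ((\<chi> j. if j = s0 then ?TB $ j - ?TA $ j else ?TA $ j) :: real^'n^'n) * t" for t
  proof -
    have "det (M t) = det (transpose (M t))" by (rule det_transpose[symmetric])
    also have "\<dots> = det ((\<chi> j. if j = s0 then ?TA $ j else ?TA $ j) :: real^'n^'n)
        + det ((\<chi> j. if j = s0 then t *s (?TB $ j - ?TA $ j) else ?TA $ j) :: real^'n^'n)"
      unfolding tr by (rule det_row_add)
    also have "det ((\<chi> j. if j = s0 then t *s (?TB $ j - ?TA $ j) else ?TA $ j) :: real^'n^'n)
       = t * det ((\<chi> j. if j = s0 then ?TB $ j - ?TA $ j else ?TA $ j) :: real^'n^'n)"
      by (rule det_row_mul)
    also have "((\<chi> j. if j = s0 then ?TA $ j else ?TA $ j) :: real^'n^'n) = transpose A"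
      by (simp add: vec_eq_iff)
    finally show ?thesis by (simp add: mult.commute)
  qed
  show ?thesis unfolding aff_def by (intro exI allI) (rule h)
qed
lemma aff_add: "aff f \<Longrightarrow> aff g \<Longrightarrow> aff (\<lambda>t. f t + g t)"
proof -
  assume "aff f" "aff g"
  then obtain a b a' b' where ab: "\<And>t. f t = a + b * t" "\<And>t. g t = a' + b' * t" unfolding aff_def by metis
  show ?thesis unfolding aff_def ab by (rule exI[of _ "a + a'"], rule exI[of _ "b + b'"]) (simp add: algebra_simps)
qed

lemma aff_sum: "finite I \<Longrightarrow> (\<And>i. i \<in> I \<Longrightarrow> aff (f i)) \<Longrightarrow> aff (\<lambda>t. \<Sum>i\<in>I. f i t)"
proof (induction I rule: finite_induct)
  case empty then show ?case unfolding aff_def by (intro exI[of _ 0]) simp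
next
  case (insert x F) then show ?case by (simp add: aff_add)
qed

lemma aff_cmult: "aff f \<Longrightarrow> aff (\<lambda>t. c * f t)"
proof -
  assume "aff f"
  then obtain a b where ab: "\<And>t. f t = a + b * t" unfolding aff_def by blast
  show ?thesis unfolding aff_def ab by (rule exI[of _ "c * a"], rule exI[of _ "c * b"]) (simp add: algebra_simps)
qed

lemma aff_multc: "aff f \<Longrightarrow> aff (\<lambda>t. f t * c)"
  using aff_cmult[of f c] by (simp add: mult.commute)

lemma single_state_forms:
  fixes w :: "'s::finite \<Rightarrow> 'a::finite \<Rightarrow> real"
  assumes ww: "\<And>s. s \<noteq> s0 \<Longrightarrow> w s = w' s"
  shows "aff (\<lambda>t. DD \<gamma> T (seg w w' t))" "aff (\<lambda>t. NN d0 R \<gamma> T (seg w w' t))"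
proof -
  have Pd: "j \<noteq> s0 \<Longrightarrow> Pm T w' j i = Pm T w j i" for i j using ww by (simp add: Pm_def)
  have Am_e: "Am \<gamma> T (seg w w' t) $ i $ j = Am \<gamma> T w $ i $ j + t * (Am \<gamma> T w' $ i $ j - Am \<gamma> T w $ i $ j)" for t i j
    by (rule Am_seg)
  have Am_d: "j \<noteq> s0 \<Longrightarrow> Am \<gamma> T w' $ i $ j = Am \<gamma> T w $ i $ j" for i j
    by (simp add: Am_def Pd)
  show "aff (\<lambda>t. DD \<gamma> T (seg w w' t))"
    unfolding DD_def by (rule det_aff_col[OF Am_e Am_d])
  have Ak_e: "Ak d0 \<gamma> T (seg w w' t) k $ i $ j = Ak d0 \<gamma> T w k $ i $ j + t * (Ak d0 \<gamma> T w' k $ i $ j - Ak d0 \<gamma> T w k $ i $ j)" for t i j k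
    by (rule Ak_seg)
  have Ak_d: "j \<noteq> s0 \<Longrightarrow> Ak d0 \<gamma> T w' k $ i $ j = Ak d0 \<gamma> T w k $ i $ j" for i j k
    by (simp add: Ak_def Am_d)
  have "aff (\<lambda>t. rv R (seg w w' t) k * det (Ak d0 \<gamma> T (seg w w' t) k))" for k
  proof (cases "k = s0")
    case True
    have "Ak d0 \<gamma> T (seg w w' t) k = Ak d0 \<gamma> T w k" for t
      using True by (simp add: vec_eq_iff Ak_def Am_e Am_d)
    moreover have "aff (\<lambda>t. rv R (seg w w' t) k)"
      unfolding aff_def rv_seg by (rule exI[of _ "rv R w k"], rule exI[of _ "rv R w' k - rv R w k"]) (simp add: algebra_simps)
    ultimately show ?thesis by (simp add: aff_multc)
  next
    case False
    have rw: "rv R w' k = rv R w k" using ww[OF False] by (simp add: rv_def)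
    have "rv R (seg w w' t) k = rv R w k" for t by (simp add: rv_seg rw algebra_simps)
    then show ?thesis using det_aff_col[OF Ak_e Ak_d] by (simp add: aff_cmult)
  qed
  then show "aff (\<lambda>t. NN d0 R \<gamma> T (seg w w' t))"
    unfolding NN_def by (intro aff_sum) auto
qed

lemma J_mob:
  fixes d0 :: "'s::finite \<Rightarrow> real" and w :: "'s \<Rightarrow> 'a::finite \<Rightarrow> real"
  assumes "is_distrib d0" "T \<in> transition_models" "0 \<le> \<gamma>" "\<gamma> < 1" "w \<in> policies" "w' \<in> policies"
    and ww: "\<And>s. s \<noteq> s0 \<Longrightarrow> w s = w' s"
  shows "\<exists>a b c d. \<forall>t\<in>{0..1}. c + d * t \<noteq> 0 \<and> J d0 R \<gamma> T (seg w w' t) = (a + b * t) / (c + d * t)"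
proof -
  have "aff (\<lambda>t. NN d0 R \<gamma> T (seg w w' t))" by (rule single_state_forms(2)[OF ww])
  then obtain a b where ab: "\<And>t. NN d0 R \<gamma> T (seg w w' t) = a + b * t"
    unfolding aff_def by auto
  have "aff (\<lambda>t. DD \<gamma> T (seg w w' t))" by (rule single_state_forms(1)[OF ww])
  then obtain c d where cd: "\<And>t. DD \<gamma> T (seg w w' t) = c + d * t"
    unfolding aff_def by auto
  show ?thesis
  proof (intro exI ballI conjI)
    fix t :: real assume t: "t \<in> {0..1}"
    then have sp: "seg w w' t \<in> policies" using seg_pol assms by auto
    have "DD \<gamma> T (seg w w' t) \<noteq> 0" by (rule DD_nz[OF sp assms(2-4)])
    then show "c + d * t \<noteq> 0" by (simp add: cd)
    show "J d0 R \<gamma> T (seg w w' t) = (a + b * t) / (c + d * t)"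
      unfolding J_NN_DD[OF assms(1) sp assms(2-4)] ab cd ..
  qed
qed

definition RAT :: "(('s::finite \<Rightarrow> 'a::finite \<Rightarrow> real) \<Rightarrow> real) \<Rightarrow> bool" where
  "RAT f \<longleftrightarrow> (\<forall>u\<in>policies. \<forall>z\<in>policies. \<exists>p q. \<forall>t\<in>{0..1}. poly q t \<noteq> 0 \<and> f (seg u z t) = poly p t / poly q t)"

definition MOB :: "(('s::finite \<Rightarrow> 'a::finite \<Rightarrow> real) \<Rightarrow> real) \<Rightarrow> bool" where
  "MOB f \<longleftrightarrow> (\<forall>w\<in>policies. \<forall>w'\<in>policies. \<forall>s0. (\<forall>s. s \<noteq> s0 \<longrightarrow> w s = w' s) \<longrightarrow>
      (\<exists>a b c d. \<forall>t\<in>{0..1}. c + d * t \<noteq> 0 \<and> f (seg w w' t) = (a + b * t) / (c + d * t)))"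

lemma poly_ev_zero:
  assumes "eventually (\<lambda>t. poly p t = (0::real)) (at_right 0)"
  shows "p = 0"
proof (rule ccontr)
  assume "p \<noteq> 0"
  then have fin: "finite {t. poly p t = 0}" by (rule poly_roots_finite)
  from assms obtain b :: real where b: "b > 0" "\<forall>y>0. y < b \<longrightarrow> poly p y = 0"
    unfolding eventually_at_right_field by auto
  then have "{0<..<b} \<subseteq> {t. poly p t = 0}" by auto
  then have "finite {0<..<b}" using fin finite_subset by blast
  then show False using infinite_Ioo[OF b(1)] by simp
qed

lemma RAT_cont:
  assumes "RAT f" "u \<in> policies" "z \<in> policies"
  shows "continuous_on {0..1} (\<lambda>t. f (seg u z t))"
proof -
  obtain p q where pq: "\<forall>t\<in>{0..1}. poly q t \<noteq> 0 \<and> f (seg u z t) = poly p t / poly q t"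
    using assms unfolding RAT_def by blast
  have c: "continuous_on {0..1} (\<lambda>t. poly p t / poly q t)"
    using pq by (intro continuous_intros) auto
  have "continuous_on {0..1} (\<lambda>t. f (seg u z t)) = continuous_on {0..1} (\<lambda>t. poly p t / poly q t)"
    by (rule continuous_on_cong) (use pq in auto)
  then show ?thesis using c by simp
qed

lemma RAT_tendsto:
  assumes "RAT f" "u \<in> policies" "z \<in> policies"
  shows "((\<lambda>t. f (seg u z t)) \<longlongrightarrow> f u) (at_right 0)"
proof -
  have "((\<lambda>t. f (seg u z t)) \<longlongrightarrow> f (seg u z 0)) (at 0 within {0..1})"
    using RAT_cont[OF assms] unfolding continuous_on_def by (drule_tac bspec[of _ _ 0]) auto
  then show ?thesis using at_within_Icc_at_right[of "0::real" 1] by simp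
qed

lemma ev_lt1: "eventually (\<lambda>t. t < (1::real)) (at_right 0)"
  unfolding eventually_at_right_field by (intro exI[of _ 1]) auto

lemma rel_ext:
  assumes "RAT f" "RAT g" "u \<in> policies" "z \<in> policies"
    and ev: "eventually (\<lambda>t. K * f (seg u z t) * g (seg u z t) + M * f (seg u z t) + L * g (seg u z t) + N = 0) (at_right 0)"
  shows "K * f z * g z + M * f z + L * g z + N = 0"
proof -
  obtain p1 q1 where 1: "\<forall>t\<in>{0..1}. poly q1 t \<noteq> 0 \<and> f (seg u z t) = poly p1 t / poly q1 t"
    using assms unfolding RAT_def by blast
  obtain p2 q2 where 2: "\<forall>t\<in>{0..1}. poly q2 t \<noteq> 0 \<and> g (seg u z t) = poly p2 t / poly q2 t"
    using assms unfolding RAT_def by blast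
  define Q where "Q = smult K (p1 * p2) + smult M (p1 * q2) + smult L (p2 * q1) + smult N (q1 * q2)"
  have key: "poly Q t = 0 \<longleftrightarrow> K * f (seg u z t) * g (seg u z t) + M * f (seg u z t) + L * g (seg u z t) + N = 0"
    if "t \<in> {0..1}" for t
  proof -
    have n1: "poly q1 t \<noteq> 0" and n2: "poly q2 t \<noteq> 0" using 1 2 that by auto
    have "poly Q t = (K * (poly p1 t / poly q1 t) * (poly p2 t / poly q2 t) + M * (poly p1 t / poly q1 t)
        + L * (poly p2 t / poly q2 t) + N) * (poly q1 t * poly q2 t)"
      using n1 n2 by (simp add: Q_def field_simps)
    then show ?thesis using 1 2 that n1 n2 by simp
  qed
  have "eventually (\<lambda>t. poly Q t = 0) (at_right 0)"
    using ev ev_lt1 eventually_at_right_less[of "0::real"]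
    by eventually_elim (simp add: key)
  then have "Q = 0" by (rule poly_ev_zero)
  then have "poly Q 1 = 0" by simp
  then show ?thesis using key[of 1] by simp
qed

definition Bx :: "('s::finite \<Rightarrow> 'a::finite \<Rightarrow> real) \<Rightarrow> real \<Rightarrow> ('s \<Rightarrow> 'a \<Rightarrow> real) set" where
  "Bx u \<epsilon> = {w \<in> policies. \<forall>s a. \<bar>w s a - u s a\<bar> < \<epsilon>}"

lemma conv_lt:
  fixes a b e t :: real
  assumes "a < e" "b < e" "0 \<le> t" "t \<le> 1"
  shows "(1 - t) * a + t * b < e"
proof (cases "t = 0")
  case True then show ?thesis using assms by simp
next
  case False
  then have "t * b < t * e" using assms by (intro mult_strict_left_mono) auto
  moreover have "(1 - t) * a \<le> (1 - t) * e" using assms by (intro mult_left_mono) auto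
  ultimately show ?thesis by (simp add: algebra_simps)
qed

lemma Bx_seg:
  assumes "w1 \<in> Bx u \<epsilon>" "w2 \<in> Bx u \<epsilon>" "0 \<le> t" "t \<le> 1"
  shows "seg w1 w2 t \<in> Bx u \<epsilon>"
proof -
  have "seg w1 w2 t \<in> policies" using assms seg_pol unfolding Bx_def by blast
  moreover have "\<bar>seg w1 w2 t s a - u s a\<bar> < \<epsilon>" for s a
  proof -
    have "\<bar>seg w1 w2 t s a - u s a\<bar> = \<bar>(1 - t) * (w1 s a - u s a) + t * (w2 s a - u s a)\<bar>"
      by (simp add: seg_def algebra_simps)
    also have "\<dots> \<le> (1 - t) * \<bar>w1 s a - u s a\<bar> + t * \<bar>w2 s a - u s a\<bar>"
      using assms(3,4) by (metis abs_mult abs_of_nonneg abs_triangle_ineq diff_ge_0_iff_ge)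
    also have "\<dots> < \<epsilon>" using assms by (intro conv_lt) (auto simp: Bx_def)
    finally show ?thesis .
  qed
  ultimately show ?thesis by (simp add: Bx_def)
qed

lemma Bx_ev:
  assumes w: "w \<in> Bx u \<epsilon>" and z: "z \<in> policies"
  shows "eventually (\<lambda>t. seg w z t \<in> Bx u \<epsilon>) (at_right 0)"
proof -
  have e1: "eventually (\<lambda>t. \<bar>seg w z t s a - u s a\<bar> < \<epsilon>) (at_right 0)" for s a
  proof -
    have "((\<lambda>t. \<bar>(1 - t) * w s a + t * z s a - u s a\<bar>) \<longlongrightarrow> \<bar>(1 - 0) * w s a + 0 * z s a - u s a\<bar>) (at_right (0::real))"
      by (intro tendsto_intros)
    then have "((\<lambda>t. \<bar>seg w z t s a - u s a\<bar>) \<longlongrightarrow> \<bar>w s a - u s a\<bar>) (at_right 0)"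
      by (simp add: seg_def)
    then show ?thesis using w by (intro order_tendstoD(2)) (auto simp: Bx_def)
  qed
  have e2: "eventually (\<lambda>t. \<forall>s. \<forall>a. \<bar>seg w z t s a - u s a\<bar> < \<epsilon>) (at_right 0)"
    by (intro eventually_all_finite e1)
  show ?thesis
    using e2 ev_lt1 eventually_at_right_less[of "0::real"]
  proof eventually_elim
    case (elim t)
    then have "seg w z t \<in> policies" using w z seg_pol[of w z t] unfolding Bx_def by auto
    then show ?case using elim by (simp add: Bx_def)
  qed
qed

lemma Bx_upd:
  assumes "u \<in> policies" "w \<in> Bx u \<epsilon>" "\<epsilon> > 0"
  shows "w(s := u s) \<in> Bx u \<epsilon>"
  using assms unfolding Bx_def policies_def by auto

lemma open_box:
  fixes U :: "('s::finite \<Rightarrow> 'a::finite \<Rightarrow> real) set"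
  assumes "U \<subseteq> policies_pos" "openin (top_of_set policies_pos) U" "u \<in> U"
  shows "\<exists>\<epsilon>>0. Bx u \<epsilon> \<subseteq> U"
proof -
  obtain S where S: "open S" "U = policies_pos \<inter> S" using assms(2) unfolding openin_open by blast
  define g :: "real^('s \<times> 'a) \<Rightarrow> ('s \<Rightarrow> 'a \<Rightarrow> real)" where "g v = (\<lambda>s a. v $ (s, a))" for v
  have cg: "continuous_on UNIV g"
    unfolding g_def by (intro continuous_on_coordinatewise_then_product linear_continuous_on bounded_linear_vec_nth)
  have oS: "open (g -` S)" by (rule open_vimage[OF S(1) cg])
  define v0 :: "real^('s \<times> 'a)" where "v0 = (\<chi> p. u (fst p) (snd p))"
  have gv0: "g v0 = u" by (simp add: g_def v0_def)
  have uS: "u \<in> S" "u \<in> policies_pos" using assms(3) S(2) by auto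
  then have "v0 \<in> g -` S" using gv0 by simp
  then obtain e where e: "e > 0" "ball v0 e \<subseteq> g -` S" using oS open_contains_ball by blast
  define m where "m = Min ((\<lambda>p. u (fst p) (snd p)) ` UNIV)"
  have m0: "m > 0" using uS(2) unfolding m_def policies_pos_def by auto
  have mle: "m \<le> u s a" for s a unfolding m_def by (rule Min_le) (auto intro: range_eqI[of _ _ "(s, a)"])
  define c where "c = real CARD('s \<times> 'a)"
  have c0: "c > 0" unfolding c_def by simp
  define \<epsilon> where "\<epsilon> = min (e / (c + 1)) m"
  have \<epsilon>0: "\<epsilon> > 0" using e m0 c0 unfolding \<epsilon>_def by auto
  have "Bx u \<epsilon> \<subseteq> U"
  proof
    fix w assume w: "w \<in> Bx u \<epsilon>"
    define v :: "real^('s \<times> 'a)" where "v = (\<chi> p. w (fst p) (snd p))"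
    have gv: "g v = w" by (simp add: g_def v_def)
    have "dist v0 v = norm (v - v0)" by (simp add: dist_norm norm_minus_commute)
    also have "\<dots> \<le> (\<Sum>p\<in>UNIV. \<bar>(v - v0) $ p\<bar>)" by (rule norm_le_l1_cart)
    also have "\<dots> \<le> (\<Sum>p\<in>(UNIV::('s \<times> 'a) set). e / (c + 1))"
    proof (rule sum_mono)
      fix p :: "'s \<times> 'a"
      have "\<bar>(v - v0) $ p\<bar> = \<bar>w (fst p) (snd p) - u (fst p) (snd p)\<bar>" by (simp add: v_def v0_def)
      also have "\<dots> < \<epsilon>" using w unfolding Bx_def by auto
      also have "\<dots> \<le> e / (c + 1)" unfolding \<epsilon>_def by simp
      finally show "\<bar>(v - v0) $ p\<bar> \<le> e / (c + 1)" by simp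
    qed
    also have "\<dots> = c * e / (c + 1)" by (simp add: c_def)
    also have "\<dots> < e" using c0 e by (simp add: field_simps)
    finally have "v \<in> ball v0 e" by simp
    then have "w \<in> S" using e gv by auto
    moreover have "w \<in> policies_pos"
    proof -
      have "w s a > 0" for s a
      proof -
        have "\<bar>w s a - u s a\<bar> < \<epsilon>" using w unfolding Bx_def by auto
        moreover have "\<epsilon> \<le> u s a" using mle[of s a] unfolding \<epsilon>_def by simp
        ultimately show ?thesis by simp
      qed
      then show ?thesis using w unfolding Bx_def policies_pos_def by auto
    qed
    ultimately show "w \<in> U" using S(2) by auto
  qed
  then show ?thesis using \<epsilon>0 by blast
qed

lemma nondeg:
  fixes a1 b1 c1 d1 a2 b2 c2 d2 c v1 v2 :: real
  assumes D1: "a1 * d1 - b1 * c1 \<noteq> 0" and D2: "a2 * d2 - b2 * c2 \<noteq> 0"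
    and e1: "(a1 - c1 * c) * (d2 * v1 - b2) - (a2 - c2 * v1) * (d1 * c - b1) = 0"
    and e2: "(a1 - c1 * c) * (d2 * v2 - b2) - (a2 - c2 * v2) * (d1 * c - b1) = 0"
  shows "v1 = v2"
proof (rule ccontr)
  assume ne: "v1 \<noteq> v2"
  define X where "X = a1 - c1 * c"
  define Y where "Y = d1 * c - b1"
  have l1: "v1 * (X * d2 + c2 * Y) = X * b2 + a2 * Y" using e1 unfolding X_def Y_def by (simp add: algebra_simps)
  have l2: "v2 * (X * d2 + c2 * Y) = X * b2 + a2 * Y" using e2 unfolding X_def Y_def by (simp add: algebra_simps)
  have "(v1 - v2) * (X * d2 + c2 * Y) = 0" using l1 l2 by (simp add: algebra_simps)
  then have k1: "X * d2 + c2 * Y = 0" using ne by simp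
  then have k2: "X * b2 + a2 * Y = 0" using l1 by simp
  have "X * (a2 * d2 - b2 * c2) = a2 * (X * d2 + c2 * Y) - c2 * (X * b2 + a2 * Y)" by (simp add: algebra_simps)
  then have "X * (a2 * d2 - b2 * c2) = 0" using k1 k2 by simp
  then have X0: "X = 0" using D2 by simp
  have "Y * (a2 * d2 - b2 * c2) = d2 * (X * b2 + a2 * Y) - b2 * (X * d2 + c2 * Y)" by (simp add: algebra_simps)
  then have "Y * (a2 * d2 - b2 * c2) = 0" using k1 k2 by simp
  then have Y0: "Y = 0" using D2 by simp
  have "a1 * d1 - b1 * c1 = (X + c1 * c) * d1 - (d1 * c - Y) * c1" unfolding X_def Y_def by simp
  also have "\<dots> = 0" using X0 Y0 by (simp add: algebra_simps)
  finally show False using D1 by simp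
qed

locale gen =
  fixes f g :: "('s::finite \<Rightarrow> 'a::finite \<Rightarrow> real) \<Rightarrow> real"
    and P B :: "('s \<Rightarrow> 'a \<Rightarrow> real) set" and u0 :: "'s \<Rightarrow> 'a \<Rightarrow> real"
  assumes RATf: "RAT f" and RATg: "RAT g" and MOBf: "MOB f" and MOBg: "MOB g"
    and PPol: "P \<subseteq> policies" and BP: "B \<subseteq> P" and u0B: "u0 \<in> B"
    and Bseg: "\<And>w1 w2 t. w1 \<in> B \<Longrightarrow> w2 \<in> B \<Longrightarrow> 0 \<le> t \<Longrightarrow> t \<le> 1 \<Longrightarrow> seg w1 w2 t \<in> B"
    and Bev: "\<And>w z. w \<in> B \<Longrightarrow> z \<in> policies \<Longrightarrow> eventually (\<lambda>t. seg w z t \<in> B) (at_right 0)"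
    and Bupd: "\<And>w s. w \<in> B \<Longrightarrow> w(s := u0 s) \<in> B"
    and ncf: "\<exists>x\<in>P. \<exists>y\<in>P. f x \<noteq> f y" and ncg: "\<exists>x\<in>P. \<exists>y\<in>P. g x \<noteq> g y"
    and comp: "\<And>x y. x \<in> P \<Longrightarrow> y \<in> P \<Longrightarrow> f x > f y \<Longrightarrow> g x \<ge> g y"
begin

lemma BPol: "B \<subseteq> policies" using BP PPol by auto

lemma swap: "gen g f P B u0"
proof (unfold_locales)
  fix x y assume "x \<in> P" "y \<in> P" "g x > g y"
  then show "f x \<ge> f y" using comp[of y x] by force
qed (use RATf RATg MOBf MOBg PPol BP u0B Bseg Bev Bupd ncf ncg in auto)

lemma const_ext:
  assumes "w \<in> policies" "z \<in> policies"
    and ev: "\<And>z. z \<in> policies \<Longrightarrow> eventually (\<lambda>t. f (seg w z t) = c) (at_right 0)"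
  shows "f z = c"
proof -
  have "eventually (\<lambda>t. 0 * f (seg w z t) * g (seg w z t) + 1 * f (seg w z t) + 0 * g (seg w z t) + (- c) = 0) (at_right 0)"
    using ev[OF assms(2)] by eventually_elim simp
  from rel_ext[OF RATf RATg assms(1,2) this] show ?thesis by simp
qed

lemma f_nonconst: "\<not> (\<forall>z\<in>policies. f z = c)"
proof
  assume h: "\<forall>z\<in>policies. f z = c"
  obtain x y where xy: "x \<in> P" "y \<in> P" "f x \<noteq> f y" using ncf by blast
  then have "x \<in> policies" "y \<in> policies" using PPol by auto
  then have "f x = c" "f y = c" using h by auto
  then show False using xy by simp
qed

lemma tie_lt:
  assumes w1: "w1 \<in> B" and w2: "w2 \<in> B" and fe: "f w1 = f w2" and lt: "g w1 < g w2"
  shows False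
proof -
  have mid: "f x = f w1" if "x \<in> P" "g w1 < g x" "g x < g w2" for x
  proof -
    have "\<not> f x > f w2" using comp[OF that(1), of w2] w2 BP that(3) by auto
    moreover have "\<not> f w1 > f x" using comp[of w1 x] w1 BP that(1,2) by auto
    ultimately show ?thesis using fe by simp
  qed
  have w1p: "w1 \<in> policies" and w2p: "w2 \<in> policies" using w1 w2 BPol by auto
  have ch: "continuous_on {0..1} (\<lambda>t. g (seg w1 w2 t))" by (rule RAT_cont[OF RATg w1p w2p])
  obtain t where t: "0 \<le> t" "t \<le> 1" "g (seg w1 w2 t) = (g w1 + g w2) / 2"
    using IVT'[of "\<lambda>t. g (seg w1 w2 t)" 0 "(g w1 + g w2) / 2" 1] ch lt by auto
  define ws where "ws = seg w1 w2 t"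
  have wsB: "ws \<in> B" unfolding ws_def using Bseg w1 w2 t by auto
  then have wsp: "ws \<in> policies" using BPol by auto
  have "\<forall>z\<in>policies. f z = f w1"
  proof (intro ballI const_ext[OF wsp])
    fix z :: "'s \<Rightarrow> 'a \<Rightarrow> real" assume z: "z \<in> policies"
    have tend: "((\<lambda>t. g (seg ws z t)) \<longlongrightarrow> g ws) (at_right 0)" by (rule RAT_tendsto[OF RATg wsp z])
    have gws: "g ws = (g w1 + g w2) / 2" using t unfolding ws_def by simp
    have e1: "eventually (\<lambda>t. g (seg ws z t) > g w1) (at_right 0)"
      using order_tendstoD(1)[OF tend] gws lt by simp
    have e2: "eventually (\<lambda>t. g (seg ws z t) < g w2) (at_right 0)"
      using order_tendstoD(2)[OF tend] gws lt by simp
    show "eventually (\<lambda>t. f (seg ws z t) = f w1) (at_right 0)"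
      using e1 e2 Bev[OF wsB z] by eventually_elim (use mid BP in auto)
  qed
  then show False using f_nonconst by blast
qed

lemma tie:
  assumes "w1 \<in> B" "w2 \<in> B" "f w1 = f w2"
  shows "g w1 = g w2"
  using tie_lt[OF assms] tie_lt[OF assms(2,1)] assms(3) by (metis linorder_neqE_linordered_idom)

lemma tie':
  assumes "w1 \<in> B" "w2 \<in> B" "g w1 = g w2"
  shows "f w1 = f w2"
  using gen.tie[OF swap assms] .

lemma exists_pair: "\<exists>w\<in>B. \<exists>w'\<in>B. \<exists>s0. (\<forall>s. s \<noteq> s0 \<longrightarrow> w s = w' s) \<and> f w \<noteq> f w'"
proof (rule ccontr)
  assume na: "\<not> ?thesis"
  have eq: "f w = f w'" if "w \<in> B" "w' \<in> B" "\<forall>s. s \<noteq> s0 \<longrightarrow> w s = w' s" for w w' s0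
    using na that by blast
  have ind: "\<forall>w\<in>B. card {s. w s \<noteq> u0 s} = n \<longrightarrow> f w = f u0" for n
  proof (induction n)
    case 0
    show ?case
    proof (intro ballI impI)
      fix w assume "w \<in> B" "card {s. w s \<noteq> u0 s} = 0"
      then have "{s. w s \<noteq> u0 s} = {}" by simp
      then have "w = u0" by auto
      then show "f w = f u0" by simp
    qed
  next
    case (Suc n)
    show ?case
    proof (intro ballI impI)
      fix w assume w: "w \<in> B" and c: "card {s. w s \<noteq> u0 s} = Suc n"
      then obtain s where s: "w s \<noteq> u0 s"
        by (metis (mono_tags, lifting) card.empty empty_Collect_eq nat.distinct(1))
      define w' where "w' = w(s := u0 s)"
      have w'B: "w' \<in> B" unfolding w'_def by (rule Bupd[OF w])
      have "{s'. w' s' \<noteq> u0 s'} = {s'. w s' \<noteq> u0 s'} - {s}" unfolding w'_def by auto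
      then have "card {s'. w' s' \<noteq> u0 s'} = n" using c s by (simp add: card_Diff_singleton)
      then have "f w' = f u0" using Suc.IH w'B by blast
      moreover have "f w' = f w" using eq[OF w'B w, of s] unfolding w'_def by auto
      ultimately show "f w = f u0" by simp
    qed
  qed
  then have fB: "f w = f u0" if "w \<in> B" for w using that by blast
  have u0p: "u0 \<in> policies" using u0B BPol by auto
  have "\<forall>z\<in>policies. f z = f u0"
  proof (intro ballI const_ext[OF u0p])
    fix z :: "'s \<Rightarrow> 'a \<Rightarrow> real" assume z: "z \<in> policies"
    show "eventually (\<lambda>t. f (seg u0 z t) = f u0) (at_right 0)"
      using Bev[OF u0B z] by eventually_elim (rule fB)
  qed
  then show False using f_nonconst by blast
qed

lemma main_rel:
  "\<exists>\<Phi>. (\<forall>z\<in>policies. \<Phi> (f z) (g z) = (0::real))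
     \<and> (\<forall>c v1 v2. \<Phi> c v1 = 0 \<longrightarrow> \<Phi> c v2 = 0 \<longrightarrow> v1 = v2)
     \<and> (\<forall>c v1 v2. \<Phi> v1 c = 0 \<longrightarrow> \<Phi> v2 c = 0 \<longrightarrow> v1 = v2)"
proof -
  obtain w w' s0 where w: "w \<in> B" and w': "w' \<in> B" and ws: "\<forall>s. s \<noteq> s0 \<longrightarrow> w s = w' s"
    and fne: "f w \<noteq> f w'" using exists_pair by blast
  have wp: "w \<in> policies" and w'p: "w' \<in> policies" using w w' BPol by auto
  obtain a1 b1 c1 d1 where F: "\<forall>t\<in>{0..1}. c1 + d1 * t \<noteq> 0 \<and> f (seg w w' t) = (a1 + b1 * t) / (c1 + d1 * t)"
    using MOBf wp w'p ws unfolding MOB_def by blast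
  obtain a2 b2 c2 d2 where G: "\<forall>t\<in>{0..1}. c2 + d2 * t \<noteq> 0 \<and> g (seg w w' t) = (a2 + b2 * t) / (c2 + d2 * t)"
    using MOBg wp w'p ws unfolding MOB_def by blast
  have gne: "g w \<noteq> g w'" using tie'[OF w w'] fne by blast
  have F0: "c1 \<noteq> 0" "f w = a1 / c1" and F1: "c1 + d1 \<noteq> 0" "f w' = (a1 + b1) / (c1 + d1)"
    using F[rule_format, of 0] F[rule_format, of 1] by auto
  have G0: "c2 \<noteq> 0" "g w = a2 / c2" and G1: "c2 + d2 \<noteq> 0" "g w' = (a2 + b2) / (c2 + d2)"
    using G[rule_format, of 0] G[rule_format, of 1] by auto
  have D1: "a1 * d1 - b1 * c1 \<noteq> 0"
  proof
    assume "a1 * d1 - b1 * c1 = 0"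
    then have "a1 / c1 = (a1 + b1) / (c1 + d1)" using F0 F1 by (simp add: field_simps)
    then show False using fne F0 F1 by simp
  qed
  have D2: "a2 * d2 - b2 * c2 \<noteq> 0"
  proof
    assume "a2 * d2 - b2 * c2 = 0"
    then have "a2 / c2 = (a2 + b2) / (c2 + d2)" using G0 G1 by (simp add: field_simps)
    then show False using gne G0 G1 by simp
  qed
  define \<Phi> where "\<Phi> v x = (a1 - c1 * v) * (d2 * x - b2) - (a2 - c2 * x) * (d1 * v - b1)" for v x
  have \<Phi>exp: "\<Phi> v x = (c2 * d1 - c1 * d2) * v * x + (c1 * b2 - a2 * d1) * v + (a1 * d2 - c2 * b1) * x + (a2 * b1 - a1 * b2)" for v x
    unfolding \<Phi>_def by (simp add: algebra_simps)
  have onl: "\<Phi> (f (seg w w' t)) (g (seg w w' t)) = 0" if "t \<in> {0..1}" for t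
  proof -
    have n1: "c1 + d1 * t \<noteq> 0" and n2: "c2 + d2 * t \<noteq> 0" using F G that by auto
    have "\<Phi> (f (seg w w' t)) (g (seg w w' t))
      = \<Phi> ((a1 + b1 * t) / (c1 + d1 * t)) ((a2 + b2 * t) / (c2 + d2 * t))" using F G that by simp
    also have "\<dots> = 0" unfolding \<Phi>_def using n1 n2 by (simp add: field_simps)
    finally show ?thesis .
  qed
  define lo where "lo = min (f w) (f w')"
  define hi where "hi = max (f w) (f w')"
  have cf: "continuous_on {0..1} (\<lambda>t. f (seg w w' t))" by (rule RAT_cont[OF RATf wp w'p])
  have attain: "\<exists>t\<in>{0..1}. f (seg w w' t) = v" if "lo \<le> v" "v \<le> hi" for v
  proof (cases "f w \<le> f w'")
    case True
    then show ?thesis using IVT'[of "\<lambda>t. f (seg w w' t)" 0 v 1] cf that unfolding lo_def hi_def by auto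
  next
    case False
    then show ?thesis using IVT2'[of "\<lambda>t. f (seg w w' t)" 1 v 0] cf that unfolding lo_def hi_def by auto
  qed
  have lohi: "lo < (f w + f w') / 2" "(f w + f w') / 2 < hi" using fne unfolding lo_def hi_def by auto
  obtain ts where ts: "ts \<in> {0..1}" "f (seg w w' ts) = (f w + f w') / 2"
    using attain[of "(f w + f w') / 2"] lohi by auto
  define us where "us = seg w w' ts"
  have usB: "us \<in> B" unfolding us_def using Bseg w w' ts by auto
  then have usp: "us \<in> policies" using BPol by auto
  have inB: "\<Phi> (f x) (g x) = 0" if "x \<in> B" "lo < f x" "f x < hi" for x
  proof -
    have "lo \<le> f x" "f x \<le> hi" using that by auto
    then obtain t' where t': "t' \<in> {0..1}" "f (seg w w' t') = f x" using attain[of "f x"] by blast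
    have "seg w w' t' \<in> B" using Bseg w w' t' by auto
    then have "g x = g (seg w w' t')" using tie[OF that(1)] t' by simp
    then show ?thesis using onl[OF t'(1)] t' by simp
  qed
  have all: "\<Phi> (f z) (g z) = 0" if z: "z \<in> policies" for z
  proof -
    have tend: "((\<lambda>t. f (seg us z t)) \<longlongrightarrow> f us) (at_right 0)" by (rule RAT_tendsto[OF RATf usp z])
    have fus: "f us = (f w + f w') / 2" using ts unfolding us_def by simp
    have e1: "eventually (\<lambda>t. f (seg us z t) > lo) (at_right 0)"
      using order_tendstoD(1)[OF tend] fus lohi by simp
    have e2: "eventually (\<lambda>t. f (seg us z t) < hi) (at_right 0)"
      using order_tendstoD(2)[OF tend] fus lohi by simp
    have "eventually (\<lambda>t. (c2 * d1 - c1 * d2) * f (seg us z t) * g (seg us z t) + (c1 * b2 - a2 * d1) * f (seg us z t)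
        + (a1 * d2 - c2 * b1) * g (seg us z t) + (a2 * b1 - a1 * b2) = 0) (at_right 0)"
      using e1 e2 Bev[OF usB z] by eventually_elim (use inB \<Phi>exp in metis)
    from rel_ext[OF RATf RATg usp z this] show ?thesis using \<Phi>exp by simp
  qed
  have nd1: "\<forall>c v1 v2. \<Phi> c v1 = 0 \<longrightarrow> \<Phi> c v2 = 0 \<longrightarrow> v1 = v2"
    using nondeg[OF D1 D2] unfolding \<Phi>_def by blast
  have nd2: "\<forall>c v1 v2. \<Phi> v1 c = 0 \<longrightarrow> \<Phi> v2 c = 0 \<longrightarrow> v1 = v2"
  proof (intro allI impI)
    fix c v1 v2 assume h1: "\<Phi> v1 c = 0" and h2: "\<Phi> v2 c = 0"
    have "(a2 - c2 * c) * (d1 * v1 - b1) - (a1 - c1 * v1) * (d2 * c - b2) = 0"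
      using h1 unfolding \<Phi>_def by (simp add: algebra_simps)
    moreover have "(a2 - c2 * c) * (d1 * v2 - b1) - (a1 - c1 * v2) * (d2 * c - b2) = 0"
      using h2 unfolding \<Phi>_def by (simp add: algebra_simps)
    ultimately show "v1 = v2" by (rule nondeg[OF D2 D1])
  qed
  show ?thesis using all nd1 nd2 by blast
qed

lemma equiv:
  assumes x: "x \<in> P" and y: "y \<in> P"
  shows "f x \<ge> f y \<longleftrightarrow> g x \<ge> g y"
proof -
  obtain \<Phi> :: "real \<Rightarrow> real \<Rightarrow> real" where
    all: "\<forall>z\<in>policies. \<Phi> (f z) (g z) = 0"
    and nd1: "\<forall>c v1 v2. \<Phi> c v1 = 0 \<longrightarrow> \<Phi> c v2 = 0 \<longrightarrow> v1 = v2"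
    and nd2: "\<forall>c v1 v2. \<Phi> v1 c = 0 \<longrightarrow> \<Phi> v2 c = 0 \<longrightarrow> v1 = v2"
    using main_rel by blast
  have xp: "x \<in> policies" and yp: "y \<in> policies" using x y PPol by auto
  show ?thesis
  proof
    assume h: "f x \<ge> f y"
    show "g x \<ge> g y"
    proof (rule ccontr)
      assume ng: "\<not> g x \<ge> g y"
      show False
      proof (cases "f x > f y")
        case True then show False using comp[OF x y] ng by simp
      next
        case False
        then have "f x = f y" using h by simp
        then have "\<Phi> (f x) (g x) = 0" "\<Phi> (f x) (g y) = 0" using all xp yp by auto
        then have "g x = g y" using nd1 by blast
        then show False using ng by simp
      qed
    qed
  next
    assume h: "g x \<ge> g y"
    show "f x \<ge> f y"
    proof (rule ccontr)
      assume nf: "\<not> f x \<ge> f y"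
      then have "g y \<ge> g x" using comp[OF y x] by simp
      then have "g x = g y" using h by simp
      then have "\<Phi> (f x) (g x) = 0" "\<Phi> (f y) (g x) = 0" using all xp yp by auto
      then have "f x = f y" using nd2 by blast
      then show False using nf by simp
    qed
  qed
qed

end

theorem mainTheorem11:
  fixes d0 :: "'s::finite \<Rightarrow> real"
    and R :: "'s \<Rightarrow> 'a::finite \<Rightarrow> real"
    and \<gamma> :: real
    and P :: "('s \<Rightarrow> 'a \<Rightarrow> real) set"
  assumes "CARD('a) > 1"
    and "is_distrib d0"
    and "0 \<le> \<gamma>" and "\<gamma> < 1"
    and "P \<subseteq> policies"
    and "\<exists>U. U \<noteq> {} \<and> U \<subseteq> P \<and> U \<subseteq> policies_pos \<and> openin (top_of_set policies_pos) U"
  shows "\<forall>T\<in>transition_models. \<forall>T'\<in>transition_models.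
           all_reachable d0 T \<and> all_reachable d0 T' \<and>
           \<not> trivial_on (J d0 R \<gamma> T) P \<and> \<not> trivial_on (J d0 R \<gamma> T') P \<and>
           \<not> equivalent_on (J d0 R \<gamma> T) (J d0 R \<gamma> T') P
           \<longrightarrow> exploitable d0 R \<gamma> T T' P"
proof (intro ballI impI)
  fix T T' :: "'s \<Rightarrow> 'a \<Rightarrow> 's \<Rightarrow> real"
  assume T: "T \<in> transition_models" and T': "T' \<in> transition_models"
  assume H: "all_reachable d0 T \<and> all_reachable d0 T' \<and>
           \<not> trivial_on (J d0 R \<gamma> T) P \<and> \<not> trivial_on (J d0 R \<gamma> T') P \<and>
           \<not> equivalent_on (J d0 R \<gamma> T) (J d0 R \<gamma> T') P"
  show "exploitable d0 R \<gamma> T T' P"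
  proof (rule ccontr)
    assume ne: "\<not> exploitable d0 R \<gamma> T T' P"
    obtain U where U: "U \<noteq> {}" "U \<subseteq> P" "U \<subseteq> policies_pos" "openin (top_of_set policies_pos) U"
      using assms(6) by blast
    obtain u where u: "u \<in> U" using U(1) by blast
    obtain \<epsilon> where \<epsilon>: "\<epsilon> > 0" "Bx u \<epsilon> \<subseteq> U" using open_box[OF U(3) U(4) u] by blast
    have up: "u \<in> policies" using u U(3) unfolding policies_pos_def by auto
    have rat: "RAT (J d0 R \<gamma> TT)" if TT: "TT \<in> transition_models" for TT
      unfolding RAT_def
    proof (intro ballI)
      fix u z :: "'s \<Rightarrow> 'a \<Rightarrow> real" assume "u \<in> policies" "z \<in> policies"
      then show "\<exists>p q. \<forall>t\<in>{0..1}. poly q t \<noteq> 0 \<and> J d0 R \<gamma> TT (seg u z t) = poly p t / poly q t"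
        by (rule J_rat[OF assms(2) TT assms(3,4)])
    qed
    have mob: "MOB (J d0 R \<gamma> TT)" if TT: "TT \<in> transition_models" for TT
      unfolding MOB_def
    proof (intro ballI allI impI)
      fix w w' :: "'s \<Rightarrow> 'a \<Rightarrow> real" and s0 :: 's
      assume "w \<in> policies" "w' \<in> policies" and ws: "\<forall>s. s \<noteq> s0 \<longrightarrow> w s = w' s"
      then show "\<exists>a b c d. \<forall>t\<in>{0..1}. c + d * t \<noteq> 0 \<and> J d0 R \<gamma> TT (seg w w' t) = (a + b * t) / (c + d * t)"
        by (intro J_mob[OF assms(2) TT assms(3,4)]) auto
    qed
    have BP: "Bx u \<epsilon> \<subseteq> P" using \<epsilon>(2) U(2) by auto
    have u0B: "u \<in> Bx u \<epsilon>" using up \<epsilon>(1) unfolding Bx_def by auto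
    have Bseg: "\<And>w1 w2 t. w1 \<in> Bx u \<epsilon> \<Longrightarrow> w2 \<in> Bx u \<epsilon> \<Longrightarrow> 0 \<le> t \<Longrightarrow> t \<le> 1 \<Longrightarrow> seg w1 w2 t \<in> Bx u \<epsilon>"
      by (rule Bx_seg)
    have Bev: "\<And>w z. w \<in> Bx u \<epsilon> \<Longrightarrow> z \<in> policies \<Longrightarrow> eventually (\<lambda>t. seg w z t \<in> Bx u \<epsilon>) (at_right 0)"
      by (rule Bx_ev)
    have Bupd: "\<And>w s. w \<in> Bx u \<epsilon> \<Longrightarrow> w(s := u s) \<in> Bx u \<epsilon>"
      using Bx_upd[OF up _ \<epsilon>(1)] by blast
    have ncf: "\<exists>x\<in>P. \<exists>y\<in>P. J d0 R \<gamma> T x \<noteq> J d0 R \<gamma> T y"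
      using H unfolding trivial_on_def by blast
    have ncg: "\<exists>x\<in>P. \<exists>y\<in>P. J d0 R \<gamma> T' x \<noteq> J d0 R \<gamma> T' y"
      using H unfolding trivial_on_def by blast
    have comp: "\<And>x y. x \<in> P \<Longrightarrow> y \<in> P \<Longrightarrow> J d0 R \<gamma> T x > J d0 R \<gamma> T y \<Longrightarrow> J d0 R \<gamma> T' x \<ge> J d0 R \<gamma> T' y"
      using ne unfolding exploitable_def by (meson not_le)
    have G: "gen (J d0 R \<gamma> T) (J d0 R \<gamma> T') P (Bx u \<epsilon>) u"
      by (rule gen.intro[OF rat[OF T] rat[OF T'] mob[OF T] mob[OF T'] assms(5) BP u0B Bseg Bev Bupd ncf ncg comp])
    have "equivalent_on (J d0 R \<gamma> T) (J d0 R \<gamma> T') P"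
      unfolding equivalent_on_def using gen.equiv[OF G] by blast
    then show False using H by blast
  qed
qed

end
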